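(* Let $0<c<\Gamma_0$ and $t>0$, and let $\mathcal D=\{(\tau,p):0<\tau<t,\ c<p<\Gamma_0\}$. Let $A$ be the cooperation area and regions IV, V, VI as defined in the context, and let $w_0$, $w_1$, $w_2$ be the associated thresholds defined there. If $(\tau^\star,p^\star)\in\mathcal D$ maximizes $A$ over $\mathcal D$, then one of the following holds: - $(\tau^\star,p^\star)$ lies in the closure of region IV; - $(\tau^\star,p^\star)$ lies in region V and $A_c(\tau^\star,p^\star;w_1,1)-A_s(\tau^\star,p^\star;w_0,w_1)=1-2w_1+w_0$; - $(\tau^\star,p^\star)$ lies in region VI and $A_s(\tau^\star,p^\star;w_2,1)-A_c(\tau^\star,p^\star;w_0,w_2)=1-2w_2+w_0$. Here $w_0,w_1,w_2$ are evaluated at $(\tau^\star,p^\star)$.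
   Context: The client utility is linear: $\Gamma(d)=\Gamma_0(1-d)$. For $(\tau,p)\in\mathcal D$ write $s=\tau/t$ and, for $w\in(0,1]$, set $K(w)=1-(1-w)s$. Define the SP and client outage thresholds $$d_s(w;\tau,p)=1-\frac{cK(w)}{wp},\qquad d_c(w;\tau,p)=1-\frac{p}{\Gamma_0K(w)}.$$ The cooperation area is $$A(\tau,p)=\int_0^1\max\{\min(d_s(w;\tau,p),d_c(w;\tau,p)),0\}\,dw.$$ For $0\le x\le y\le 1$, let $$A_s(\tau,p;x,y)=\int_x^y d_s(w;\tau,p)\,dw,\qquad A_c(\tau,p;x,y)=\int_x^y d_c(w;\tau,p)\,dw.$$ Define the thresholds $$w_0=\max\left\{\frac{c(t-\tau)}{pt-c\tau},\ \frac{pt-\Gamma_0(t-\tau)}{\Gamma_0\tau}\right\},$$ $$w_{1}=\left(\frac{p-\sqrt{p^2-4c\Gamma_0 s(1-s)}}{2s\sqrt{c\Gamma_0}}\right)^2,\qquad w_{2}=\left(\frac{p+\sqrt{p^2-4c\Gamma_0 s(1-s)}}{2s\sqrt{c\Gamma_0}}\right)^2.$$ The regions (subsets of $\mathcal D$) are: - region IV: $p^2\ge 4c\Gamma_0 s(1-s)$, $p<\Gamma_0(1-s)+cs$, $p<\sqrt{c\Gamma_0}$, and $\tfrac12<s<\tfrac{\Gamma_0}{\Gamma_0+c}$; - region V: $p^2\ge4c\Gamma_0 s(1-s)$, $p<\Gamma_0(1-s)+cs$, and $p>\sqrt{c\Gamma_0}$; - region VI: $p^2\ge 4c\Gamma_0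 s(1-s)$, $p>\Gamma_0(1-s)+cs$, and $p<\sqrt{c\Gamma_0}$. *)

theory Defs
  imports "HOL-Analysis.Analysis"
begin

text \<open>Parameters: c (SP cost), G0 (Gamma_0), t (horizon). Points of the domain are pairs (tau, p).\<close>

definition K_fun :: "real \<Rightarrow> real \<Rightarrow> real \<Rightarrow> real" where
  "K_fun t \<tau> w = 1 - (1 - w) * (\<tau> / t)"

definition d_s :: "real \<Rightarrow> real \<Rightarrow> real \<Rightarrow> real \<Rightarrow> real \<Rightarrow> real" where
  "d_s c t \<tau> p w = 1 - c * K_fun t \<tau> w / (w * p)"

definition d_c :: "real \<Rightarrow> real \<Rightarrow> real \<Rightarrow> real \<Rightarrow> real \<Rightarrow> real" where
  "d_c G0 t \<tau> p w = 1 - p / (G0 * K_fun t \<tau> w)"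

definition coop_area :: "real \<Rightarrow> real \<Rightarrow> real \<Rightarrow> real \<Rightarrow> real \<Rightarrow> real" where
  "coop_area c G0 t \<tau> p =
     integral {0..1} (\<lambda>w. max (min (d_s c t \<tau> p w) (d_c G0 t \<tau> p w)) 0)"

definition A_s :: "real \<Rightarrow> real \<Rightarrow> real \<Rightarrow> real \<Rightarrow> real \<Rightarrow> real \<Rightarrow> real" where
  "A_s c t \<tau> p x y = integral {x..y} (\<lambda>w. d_s c t \<tau> p w)"

definition A_c :: "real \<Rightarrow> real \<Rightarrow> real \<Rightarrow> real \<Rightarrow> real \<Rightarrow> real \<Rightarrow> real" where
  "A_c G0 t \<tau> p x y = integral {x..y} (\<lambda>w. d_c G0 t \<tau> p w)"

definition w0 :: "real \<Rightarrow> real \<Rightarrow> real \<Rightarrow> real \<Rightarrow> real \<Rightarrow> real" where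
  "w0 c G0 t \<tau> p = max (c * (t - \<tau>) / (p * t - c * \<tau>)) ((p * t - G0 * (t - \<tau>)) / (G0 * \<tau>))"

definition w1 :: "real \<Rightarrow> real \<Rightarrow> real \<Rightarrow> real \<Rightarrow> real \<Rightarrow> real" where
  "w1 c G0 t \<tau> p = (let s = \<tau> / t in
     ((p - sqrt (p\<^sup>2 - 4 * c * G0 * s * (1 - s))) / (2 * s * sqrt (c * G0)))\<^sup>2)"

definition w2 :: "real \<Rightarrow> real \<Rightarrow> real \<Rightarrow> real \<Rightarrow> real \<Rightarrow> real" where
  "w2 c G0 t \<tau> p = (let s = \<tau> / t in
     ((p + sqrt (p\<^sup>2 - 4 * c * G0 * s * (1 - s))) / (2 * s * sqrt (c * G0)))\<^sup>2)"

definition dom_D :: "real \<Rightarrow> real \<Rightarrow> real \<Rightarrow> (real \<times> real) set" where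
  "dom_D c G0 t = {(\<tau>, p). 0 < \<tau> \<and> \<tau> < t \<and> c < p \<and> p < G0}"

definition region_IV :: "real \<Rightarrow> real \<Rightarrow> real \<Rightarrow> (real \<times> real) set" where
  "region_IV c G0 t = {(\<tau>, p) \<in> dom_D c G0 t. let s = \<tau> / t in
     p\<^sup>2 \<ge> 4 * c * G0 * s * (1 - s) \<and> p < G0 * (1 - s) + c * s \<and> p < sqrt (c * G0)
     \<and> 1/2 < s \<and> s < G0 / (G0 + c)}"

definition region_V :: "real \<Rightarrow> real \<Rightarrow> real \<Rightarrow> (real \<times> real) set" where
  "region_V c G0 t = {(\<tau>, p) \<in> dom_D c G0 t. let s = \<tau> / t in
     p\<^sup>2 \<ge> 4 * c * G0 * s * (1 - s) \<and> p < G0 * (1 - s) + c * s \<and> p > sqrt (c * G0)}"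

definition region_VI :: "real \<Rightarrow> real \<Rightarrow> real \<Rightarrow> (real \<times> real) set" where
  "region_VI c G0 t = {(\<tau>, p) \<in> dom_D c G0 t. let s = \<tau> / t in
     p\<^sup>2 \<ge> 4 * c * G0 * s * (1 - s) \<and> p > G0 * (1 - s) + c * s \<and> p < sqrt (c * G0)}"

end

theory Submission
  imports Defs
begin

definition gg :: "real \<Rightarrow> real \<Rightarrow> real \<Rightarrow> real \<Rightarrow> real" where
  "gg k a b w = max (min (1 - (a + b*w)/w) (1 - 1/(k*(a+b*w)))) 0"

definition Phi :: "real \<Rightarrow> real \<Rightarrow> real \<Rightarrow> real" where
  "Phi k a b = integral {0..1} (gg k a b)"

lemma coop_Phi:
  assumes "0 < c" "0 < t" "0 < \<tau>" "\<tau> < t" "0 < p"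
  shows "coop_area c G0 t \<tau> p = Phi (G0/c) (c*(1-\<tau>/t)/p) (c*(\<tau>/t)/p)"
proof -
  have "\<And>w. max (min (d_s c t \<tau> p w) (d_c G0 t \<tau> p w)) 0 = gg (G0/c) (c*(1-\<tau>/t)/p) (c*(\<tau>/t)/p) w"
  proof -
    fix w :: real
    have e1: "c * K_fun t \<tau> w / (w * p) = (c*(1-\<tau>/t)/p + c*(\<tau>/t)/p*w)/w"
      unfolding K_fun_def using assms by (simp add: field_simps)
    have e3: "G0/c*(c*(1-\<tau>/t)/p + c*(\<tau>/t)/p*w) = G0 * K_fun t \<tau> w / p"
      unfolding K_fun_def using assms by (simp add: field_simps)
    have e2: "p / (G0 * K_fun t \<tau> w) = 1/(G0/c*(c*(1-\<tau>/t)/p + c*(\<tau>/t)/p*w))"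
      unfolding e3 by simp
    show "?thesis w" unfolding gg_def d_s_def d_c_def e1 e2 by simp
  qed
  then show ?thesis unfolding coop_area_def Phi_def by simp
qed

lemma h_mono:
  fixes w k X X' :: real
  assumes "w > 0" "X > 0" "X' > 0" "k > 0" "(X' - X) * (X' - sqrt (w/k)) \<le> 0"
  shows "min (1 - X/w) (1 - 1/(k*X)) \<le> min (1 - X'/w) (1 - 1/(k*X'))"
    and "X' \<noteq> X \<Longrightarrow> min (1 - X/w) (1 - 1/(k*X)) < min (1 - X'/w) (1 - 1/(k*X'))"
proof -
  define C where "C = sqrt (w/k)"
  have C0: "C \<ge> 0" and C2: "C^2 = w/k" using assms by (auto simp: C_def)
  have sq: "Y \<le> C \<longleftrightarrow> k*Y^2 \<le> w" if "Y > 0" for Y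
  proof -
    have "Y \<le> C \<longleftrightarrow> Y^2 \<le> C^2" using that C0 abs_le_square_iff[of Y C] by simp
    also have "\<dots> \<longleftrightarrow> k*Y^2 \<le> k*C^2" using assms by simp
    also have "k*C^2 = w" using C2 assms by (simp add: field_simps)
    finally show ?thesis .
  qed
  have dv: "Y/w \<le> 1/(k*Y) \<longleftrightarrow> k*Y^2 \<le> w" if "Y > 0" for Y
    using assms that by (simp add: field_simps power2_eq_square)
  have key: "Y \<le> C \<longleftrightarrow> Y/w \<le> 1/(k*Y)" if "Y > 0" for Y using sq[OF that] dv[OF that] by simp
  have key2: "C \<le> Y \<Longrightarrow> 1/(k*Y) \<le> Y/w" if "Y > 0" for Y
  proof -
    assume "C \<le> Y"
    then have "C^2 \<le> Y^2" using C0 by (simp add: power_mono)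
    then have "w \<le> k*Y^2" using C2 assms by (simp add: field_simps)
    then show ?thesis using assms that by (simp add: field_simps power2_eq_square)
  qed
  have P: "(X' - X) * (X' - C) \<le> 0" using assms C_def by simp
  have "(X \<le> X' \<and> X' \<le> C) \<or> (C \<le> X' \<and> X' \<le> X)"
    using P unfolding mult_le_0_iff by auto
  then have "(min (1 - X/w) (1 - 1/(k*X)) \<le> min (1 - X'/w) (1 - 1/(k*X'))) \<and>
     (X' \<noteq> X \<longrightarrow> min (1 - X/w) (1 - 1/(k*X)) < min (1 - X'/w) (1 - 1/(k*X')))"
  proof
    assume h: "X \<le> X' \<and> X' \<le> C"
    have a1: "X/w \<le> 1/(k*X)" "X'/w \<le> 1/(k*X')" using key[of X] key[of X'] assms h by auto
    have "1/(k*X') \<le> 1/(k*X)" using h assms by (intro divide_left_mono) auto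
    moreover have "X' \<noteq> X \<Longrightarrow> 1/(k*X') < 1/(k*X)" using h assms by (intro divide_strict_left_mono) auto
    ultimately show ?thesis using a1 by auto
  next
    assume h: "C \<le> X' \<and> X' \<le> X"
    have a1: "1/(k*X) \<le> X/w" "1/(k*X') \<le> X'/w"
      using key2[of X] key2[of X'] assms h by auto
    have "X'/w \<le> X/w" using h assms by (simp add: divide_right_mono)
    moreover have "X' \<noteq> X \<Longrightarrow> X'/w < X/w" using h assms by (simp add: divide_strict_right_mono)
    ultimately show ?thesis using a1 by auto
  qed
  then show "min (1 - X/w) (1 - 1/(k*X)) \<le> min (1 - X'/w) (1 - 1/(k*X'))"
    and "X' \<noteq> X \<Longrightarrow> min (1 - X/w) (1 - 1/(k*X)) < min (1 - X'/w) (1 - 1/(k*X'))" by auto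
qed


definition gt :: "real \<Rightarrow> real \<Rightarrow> real \<Rightarrow> real \<Rightarrow> real" where
  "gt k a b w = gg k a b (max w (a/2))"

lemma max0_less: "(m::real) < m' \<Longrightarrow> max m 0 > 0 \<Longrightarrow> max m 0 < max m' 0"
  by (auto simp: max_def split: if_split_asm)

lemma gg_nonneg: "gg k a b w \<ge> 0" unfolding gg_def by simp

lemma gg_small:
  assumes "0 < w" "w \<le> a" "b \<ge> 0"
  shows "gg k a b w = 0"
proof -
  have "a/w \<ge> 1" using assms by simp
  moreover have "(a + b*w)/w \<ge> a/w" using assms by (simp add: divide_right_mono)
  ultimately have "1 - (a + b*w)/w \<le> 0" by linarith
  then show ?thesis unfolding gg_def by simp
qed

lemma gt_eq:
  assumes "0 < a" "b \<ge> 0" "0 < w"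
  shows "gt k a b w = gg k a b w"
proof (cases "w \<ge> a/2")
  case True then have "max w (a/2) = w" by simp
  then show ?thesis unfolding gt_def by simp
next
  case False
  then have "max w (a/2) = a/2" by simp
  then show ?thesis unfolding gt_def using gg_small[of "a/2" a b k] gg_small[of w a b k] assms False by simp
qed

lemma gt_cont:
  assumes "0 < a" "b \<ge> 0" "k > 0"
  shows "continuous_on {0..1} (gt k a b)"
proof -
  have p1: "max w (a/2) \<noteq> 0" for w using assms by (simp add: max_def)
  have p2: "a + b * max w (a/2) \<noteq> 0" for w
  proof -
    have "max w (a/2) \<ge> a/2" by simp
    then have "max w (a/2) \<ge> 0" using assms by linarith
    then have "b * max w (a/2) \<ge> 0" using assms by (intro mult_nonneg_nonneg)
    then have "a + b * max w (a/2) > 0" using assms by linarith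
    then show ?thesis using assms by simp
  qed
  show ?thesis unfolding gt_def gg_def
    by (intro continuous_intros) (use assms in \<open>auto simp: p1 p2\<close>)
qed

lemma Phi_gt:
  assumes "0 < a" "b \<ge> 0"
  shows "Phi k a b = integral {0..1} (gt k a b)"
  unfolding Phi_def
  by (rule integral_spike[of "{0}"]) (auto simp: gt_eq assms)

lemma Phi_less:
  fixes k a b a' b' :: real
  assumes "k > 0" "a > 0" "b \<ge> 0" "a' > 0" "b' \<ge> 0"
    and H1: "\<forall>w\<in>{0<..1}. gg k a b w > 0 \<longrightarrow> ((a'+b'*w) - (a+b*w)) * ((a'+b'*w) - sqrt (w/k)) \<le> 0"
    and H2: "\<exists>w\<in>{0<..1}. gg k a b w > 0 \<and> a'+b'*w \<noteq> a+b*w"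
  shows "Phi k a b < Phi k a' b'"
proof -
  have pw: "gg k a b w \<le> gg k a' b' w" and
       pws: "a'+b'*w \<noteq> a+b*w \<Longrightarrow> gg k a b w > 0 \<Longrightarrow> gg k a b w < gg k a' b' w"
    if w: "w \<in> {0<..1}" for w
  proof -
    have X: "a + b*w > 0" "a'+b'*w > 0" using w assms by (auto intro: add_pos_nonneg)
    show "gg k a b w \<le> gg k a' b' w"
    proof (cases "gg k a b w > 0")
      case True
      have "((a'+b'*w) - (a+b*w)) * ((a'+b'*w) - sqrt (w/k)) \<le> 0" using H1 w True by blast
      then have "min (1 - (a+b*w)/w) (1 - 1/(k*(a+b*w))) \<le> min (1 - (a'+b'*w)/w) (1 - 1/(k*(a'+b'*w)))"
        using h_mono(1)[of w "a+b*w" "a'+b'*w" k] X w assms by simp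
      then show ?thesis unfolding gg_def by (rule max.mono) simp
    next
      case False
      then show ?thesis using gg_nonneg[of k a b w] gg_nonneg[of k a' b' w] by simp
    qed
    assume ne: "a'+b'*w \<noteq> a+b*w" and pos: "gg k a b w > 0"
    have "min (1 - (a+b*w)/w) (1 - 1/(k*(a+b*w))) < min (1 - (a'+b'*w)/w) (1 - 1/(k*(a'+b'*w)))"
    proof -
      have "((a'+b'*w) - (a+b*w)) * ((a'+b'*w) - sqrt (w/k)) \<le> 0" using H1 w pos by blast
      then show ?thesis using h_mono(2)[of w "a+b*w" "a'+b'*w" k] X w assms ne by simp
    qed
    then show "gg k a b w < gg k a' b' w" using pos unfolding gg_def by (rule max0_less)
  qed
  define h where "h w = gt k a' b' w - gt k a b w" for w
  have hc: "continuous_on {0..1} h" unfolding h_def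
    using gt_cont[of a b k] gt_cont[of a' b' k] assms by (intro continuous_intros) auto
  have hnn: "h w \<ge> 0" if "w \<in> {0..1}" for w
  proof (cases "w = 0")
    case True
    have "gt k a b 0 = 0" unfolding gt_def using gg_small[of "a/2" a b k] assms by simp
    then show ?thesis unfolding h_def True using gg_nonneg[of k a' b'] unfolding gt_def by simp
  next
    case False
    then show ?thesis using that pw[of w] gt_eq[of a b w k] gt_eq[of a' b' w k] assms unfolding h_def by auto
  qed
  obtain w where w: "w \<in> {0<..1}" "gg k a b w > 0" "a'+b'*w \<noteq> a+b*w" using H2 by blast
  have "h w > 0" using pws[OF w(1) w(3) w(2)] gt_eq[of a b w k] gt_eq[of a' b' w k] assms w(1) unfolding h_def by auto
  then have "integral {0..1} h \<noteq> 0" using integral_eq_0_iff[OF hc _ hnn] w(1) by force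
  moreover have "integral {0..1} h \<ge> 0" using hnn by (intro integral_nonneg integrable_continuous_real hc) auto
  moreover have "integral {0..1} h = Phi k a' b' - Phi k a b"
    unfolding h_def Phi_gt[OF assms(2,3)] Phi_gt[OF assms(4,5)]
    by (intro Henstock_Kurzweil_Integration.integral_diff integrable_continuous_real gt_cont) (use assms in auto)
  ultimately show ?thesis by linarith
qed

lemma roots_props:
  fixes k a b \<kappa> \<Delta> \<rho>1 \<rho>2 :: real
  assumes "k > 0" "a > 0" "b > 0" "\<Delta> = 1 - 4*k*a*b" "\<Delta> \<ge> 0" "\<kappa> = sqrt k"
    and r1: "\<rho>1 = (1 - sqrt \<Delta>)/(2*\<kappa>*b)" and r2: "\<rho>2 = (1 + sqrt \<Delta>)/(2*\<kappa>*b)"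
  shows "0 < \<rho>1" "\<rho>1 \<le> \<rho>2" "\<rho>1 * \<rho>2 = a/b"
    "\<And>u. a + b*u^2 - u/\<kappa> = b*(u-\<rho>1)*(u-\<rho>2)"
    "a + b*\<rho>1^2 = \<rho>1/\<kappa>" "a + b*\<rho>2^2 = \<rho>2/\<kappa>"
proof -
  define r where "r = sqrt \<Delta>"
  have r0: "r \<ge> 0" and rr: "r^2 = \<Delta>" using assms by (auto simp: r_def)
  have kp: "\<kappa> > 0" and kk: "\<kappa>^2 = k" using assms by auto
  have "\<Delta> < 1" using assms by (simp add: mult_pos_pos)
  then have r1': "r < 1" unfolding r_def by simp
  show "0 < \<rho>1" unfolding r1 r_def[symmetric] using r1' kp assms by (simp add: field_simps)
  show "\<rho>1 \<le> \<rho>2" unfolding r1 r2 r_def[symmetric] using r0 kp assms by (simp add: field_simps)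
  have sum: "\<rho>1 + \<rho>2 = 1/(\<kappa>*b)" unfolding r1 r2 using kp assms by (simp add: field_simps)
  have prod: "\<rho>1 * \<rho>2 = a/b"
  proof -
    have "\<rho>1 * \<rho>2 = (1 - r^2)/(4*\<kappa>^2*b^2)" unfolding r1 r2 r_def[symmetric]
      by (simp add: field_simps power2_eq_square)
    also have "1 - r^2 = 4*k*a*b" using rr assms(4) by simp
    also have "(4*k*a*b)/(4*\<kappa>^2*b^2) = a/b" unfolding kk using assms by (simp add: field_simps power2_eq_square)
    finally show ?thesis .
  qed
  show "\<rho>1 * \<rho>2 = a/b" by (rule prod)
  show fac: "a + b*u^2 - u/\<kappa> = b*(u-\<rho>1)*(u-\<rho>2)" for u
  proof -
    have "b*(u-\<rho>1)*(u-\<rho>2) = b*u^2 - b*(\<rho>1+\<rho>2)*u + b*(\<rho>1*\<rho>2)" by (simp add: algebra_simps power2_eq_square)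
    also have "\<dots> = b*u^2 - u/\<kappa> + a" unfolding sum prod using assms kp by (simp add: field_simps)
    finally show ?thesis by simp
  qed
  show "a + b*\<rho>1^2 = \<rho>1/\<kappa>" using fac[of \<rho>1] by simp
  show "a + b*\<rho>2^2 = \<rho>2/\<kappa>" using fac[of \<rho>2] by simp
qed

lemma fact_pin:
  fixes a b d \<rho> \<kappa> u :: real
  assumes "\<kappa> > 0" "\<rho> > 0" "a + b*\<rho>^2 = \<rho>/\<kappa>" "b + d \<noteq> 0"
  shows "((a - d*\<rho>^2 + (b+d)*u^2) - (a + b*u^2)) * ((a - d*\<rho>^2 + (b+d)*u^2) - u/\<kappa>)
     = d*(b+d)*(u-\<rho>)^2*(u+\<rho>)*(u - (a - d*\<rho>^2)/((b+d)*\<rho>))"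
proof -
  have ik: "u/\<kappa> = u*(a + b*\<rho>^2)/\<rho>" unfolding assms(3) using assms by simp
  define \<rho>' where "\<rho>' = (a - d*\<rho>^2)/((b+d)*\<rho>)"
  have nz: "(b+d)*\<rho> \<noteq> 0" using assms by simp
  have q2: "(b+d)*\<rho>*\<rho>' = a - d*\<rho>^2" unfolding \<rho>'_def using nz by simp
  have "(b+d)*\<rho>' = ((b+d)*\<rho>*\<rho>')/\<rho>" using assms by simp
  then have q1: "(b+d)*\<rho>' = (a - d*\<rho>^2)/\<rho>" unfolding q2 .
  have q3: "(b+d)*\<rho> + (a - d*\<rho>^2)/\<rho> = (a + b*\<rho>^2)/\<rho>" using assms by (simp add: field_simps power2_eq_square)
  have "(b+d)*(u-\<rho>)*(u - \<rho>') = (b+d)*u^2 - ((b+d)*\<rho> + (b+d)*\<rho>')*u + (b+d)*\<rho>*\<rho>'"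
    by (simp add: algebra_simps power2_eq_square)
  also have "\<dots> = (b+d)*u^2 - u*(a + b*\<rho>^2)/\<rho> + (a - d*\<rho>^2)" unfolding q1 q2 q3 by simp
  finally have e2: "(a - d*\<rho>^2 + (b+d)*u^2) - u/\<kappa> = (b+d)*(u-\<rho>)*(u - (a - d*\<rho>^2)/((b+d)*\<rho>))"
    unfolding ik \<rho>'_def[symmetric] by simp
  have e1: "(a - d*\<rho>^2 + (b+d)*u^2) - (a + b*u^2) = d*(u-\<rho>)*(u+\<rho>)"
    by (simp add: algebra_simps power2_eq_square)
  have gen: "\<And>R. d*(u-\<rho>)*(u+\<rho>) * ((b+d)*(u-\<rho>)*(u-R)) = d*(b+d)*(u-\<rho>)^2*(u+\<rho>)*(u-R)"
    by (simp add: power2_eq_square mult_ac)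
  show ?thesis unfolding e1 e2 by (rule gen)
qed

lemma supp:
  assumes "k > 0" "a > 0" "b > 0" "a + b < 1" "w \<in> {0<..1}" "gg k a b w > 0"
  shows "a/(1-b) < w" "(1/k - a)/b < w"
proof -
  have w: "w > 0" using assms by simp
  have X: "a + b*w > 0" using assms w by (intro add_pos_pos mult_pos_pos)
  have m: "min (1 - (a + b*w)/w) (1 - 1/(k*(a+b*w))) > 0" using assms(6) unfolding gg_def by (simp add: max_def split: if_split_asm)
  then have "(a + b*w)/w < 1" by simp
  then have "a + b*w < w" using w by (simp add: divide_less_eq)
  then have "a < w*(1-b)" by (simp add: algebra_simps)
  then show "a/(1-b) < w" using assms by (simp add: divide_less_eq)
  have "1/(k*(a+b*w)) < 1" using m by simp
  then have "1 < k*(a+b*w)" using X assms by (simp add: divide_less_eq)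
  then have "1/k < a + b*w" using assms by (simp add: divide_less_eq mult.commute)
  then have "1/k - a < w*b" by (simp add: algebra_simps)
  then show "(1/k - a)/b < w" using assms by (simp add: divide_less_eq)
qed

lemma supp_conv:
  assumes "k > 0" "a > 0" "b > 0" "a + b < 1" "0 < w" "a/(1-b) < w" "(1/k - a)/b < w"
  shows "gg k a b w > 0"
proof -
  have X: "a + b*w > 0" using assms by (intro add_pos_pos mult_pos_pos)
  have "a < w*(1-b)" using assms by (simp add: divide_less_eq)
  then have "a + b*w < w" by (simp add: algebra_simps)
  then have "(a + b*w)/w < 1" using assms by (simp add: divide_less_eq)
  moreover have "1/k - a < w*b" using assms by (simp add: divide_less_eq)
  then have "1/k < a + b*w" by (simp add: algebra_simps)
  then have "1 < k*(a+b*w)" using assms by (simp add: divide_less_eq mult.commute)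
  then have "1/(k*(a+b*w)) < 1" using X assms by simp
  ultimately show ?thesis unfolding gg_def by simp
qed

lemma witness:
  assumes "k > 0" "a > 0" "b > 0" "a + b < 1" "1/k < a + b"
  shows "\<exists>w\<in>{0<..1}. gg k a b w > 0 \<and> w \<noteq> r"
proof -
  define W where "W = max (a/(1-b)) ((1/k - a)/b)"
  have W1: "W < 1" unfolding W_def using assms by (simp add: divide_less_eq algebra_simps)
  have "a/(1-b) > 0" using assms by simp
  then have W0: "W > 0" unfolding W_def by (rule max.strict_coboundedI1)
  have g1: "gg k a b 1 > 0" using supp_conv[of k a b 1] assms W1 unfolding W_def by simp
  define wm where "wm = (1 + W)/2"
  have wm: "wm \<in> {0<..1}" "wm \<noteq> 1" "W < wm" using W1 W0 unfolding wm_def by auto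
  have g2: "gg k a b wm > 0" using supp_conv[of k a b wm] assms wm unfolding W_def by simp
  show ?thesis
  proof (cases "r = 1")
    case True then show ?thesis using wm g2 by blast
  next
    case False then show ?thesis using g1 by force
  qed
qed

lemma pin_improve:
  fixes k a b d \<rho> :: real
  assumes "k > 0" "a > 0" "b > 0" "a + b < 1" "1/k < a + b"
    and "\<rho> > 0" "a + b*\<rho>^2 = \<rho>/sqrt k" "d \<noteq> 0" "b + d > 0" "a - d*\<rho>^2 > 0"
    and S: "\<forall>w\<in>{0<..1}. gg k a b w > 0 \<longrightarrow> d*(sqrt w - (a - d*\<rho>^2)/((b+d)*\<rho>)) \<le> 0"
  shows "Phi k a b < Phi k (a - d*\<rho>^2) (b+d)"
proof (rule Phi_less)
  show "0 < k" "0 < a" "0 \<le> b" "0 < a - d*\<rho>^2" "0 \<le> b + d" using assms by auto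
  show "\<forall>w\<in>{0<..1}. 0 < gg k a b w \<longrightarrow>
      (a - d * \<rho>\<^sup>2 + (b + d) * w - (a + b * w)) * (a - d * \<rho>\<^sup>2 + (b + d) * w - sqrt (w / k)) \<le> 0"
  proof (intro ballI impI)
    fix w assume w: "w \<in> {0<..1}" and g: "0 < gg k a b w"
    define u where "u = sqrt w"
    have u: "u > 0" "u^2 = w" "sqrt (w/k) = u/sqrt k" using w unfolding u_def by (auto simp: real_sqrt_divide)
    have "(a - d * \<rho>\<^sup>2 + (b + d) * w - (a + b * w)) * (a - d * \<rho>\<^sup>2 + (b + d) * w - sqrt (w / k))
       = d*(b+d)*(u-\<rho>)^2*(u+\<rho>)*(u - (a - d*\<rho>^2)/((b+d)*\<rho>))"
      unfolding u(3) unfolding u(2)[symmetric] using fact_pin[of "sqrt k" \<rho> a b d u] assms by simp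
    also have "\<dots> = ((b+d)*(u-\<rho>)^2*(u+\<rho>)) * (d*(u - (a - d*\<rho>^2)/((b+d)*\<rho>)))" by (simp add: algebra_simps)
    also have "\<dots> \<le> 0"
    proof (rule mult_nonneg_nonpos)
      show "0 \<le> (b+d)*(u-\<rho>)^2*(u+\<rho>)" using assms u by simp
      show "d*(u - (a - d*\<rho>^2)/((b+d)*\<rho>)) \<le> 0" using S w g unfolding u_def by blast
    qed
    finally show "(a - d * \<rho>\<^sup>2 + (b + d) * w - (a + b * w)) * (a - d * \<rho>\<^sup>2 + (b + d) * w - sqrt (w / k)) \<le> 0" .
  qed
  obtain w where w: "w \<in> {0<..1}" "gg k a b w > 0" "w \<noteq> \<rho>^2" using witness[of k a b "\<rho>^2"] assms by blast
  have eq: "a - d * \<rho>\<^sup>2 + (b + d) * w - (a + b*w) = d*(w - \<rho>^2)" by (simp add: algebra_simps)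
  have nz: "d*(w - \<rho>^2) \<noteq> 0" using w(3) assms(8) by simp
  have "a - d * \<rho>\<^sup>2 + (b + d) * w \<noteq> a + b*w" by (metis eq nz right_minus_eq)
  then show "\<exists>w\<in>{0<..1}. 0 < gg k a b w \<and> a - d * \<rho>\<^sup>2 + (b + d) * w \<noteq> a + b * w" using w by blast
qed

lemma ev_small: "(\<beta>::real) > 0 \<Longrightarrow> eventually (\<lambda>e. e*\<alpha> < \<beta>) (at_right 0)"
proof -
  assume "\<beta> > 0"
  have "((\<lambda>e. e*\<alpha>) \<longlongrightarrow> 0*\<alpha>) (at_right (0::real))" by (intro tendsto_intros)
  then show ?thesis using \<open>\<beta> > 0\<close> by (simp add: order_tendstoD(2))
qed

lemma get_e:
  assumes "eventually P (at_right (0::real))"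
  obtains e where "e > 0" "P e"
proof -
  have "eventually (\<lambda>e. P e \<and> e > 0) (at_right (0::real))"
    using assms eventually_at_right_less[of "0::real"] by (rule eventually_conj)
  then have "\<exists>e. P e \<and> e > 0" by (rule eventually_happens'[rotated]) simp
  then show ?thesis using that by blast
qed

lemma improve:
  fixes k a b :: real
  assumes k1: "k > 1" and ab: "a > 0" "b > 0" "1/k < a+b" "a+b < 1"
    and ng: "\<not> (1 - 4*k*a*b \<ge> 0 \<and> (1 + sqrt (1-4*k*a*b))/(2 * sqrt k * b) \<le> 1
               \<and> max (a/(1-b)) ((1/k - a)/b) \<le> ((1 - sqrt (1-4*k*a*b))/(2 * sqrt k * b))^2)"
  shows "\<exists>a' b'. a' > 0 \<and> b' > 0 \<and> 1/k < a'+b' \<and> a'+b' < 1 \<and> Phi k a b < Phi k a' b'"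
proof -
  have k0: "k > 0" using k1 by simp
  define \<Delta> where "\<Delta> = 1 - 4*k*a*b"
  define \<kappa> where "\<kappa> = sqrt k"
  define \<rho>1 where "\<rho>1 = (1 - sqrt \<Delta>)/(2*\<kappa>*b)"
  define \<rho>2 where "\<rho>2 = (1 + sqrt \<Delta>)/(2*\<kappa>*b)"
  define W where "W = max (a/(1-b)) ((1/k - a)/b)"
  have kp: "\<kappa> > 0" "\<kappa>^2 = k" using k0 unfolding \<kappa>_def by auto
  have ng0: "\<not> (\<Delta> \<ge> 0 \<and> \<rho>2 \<le> 1 \<and> W \<le> \<rho>1^2)"
    using ng unfolding \<Delta>_def \<rho>1_def \<rho>2_def W_def \<kappa>_def .
  have ng': "\<Delta> < 0 \<or> (\<Delta> \<ge> 0 \<and> \<rho>2 > 1) \<or> (\<Delta> \<ge> 0 \<and> W > \<rho>1^2)"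
    using ng0 by linarith
  consider (A) "\<Delta> < 0" | (B) "\<Delta> \<ge> 0" "\<rho>2 > 1" | (C) "\<Delta> \<ge> 0" "W > \<rho>1^2" using ng' by blast
  then show ?thesis
  proof cases
    case A
    have pos1: "a - 1/(4*k*b) > 0"
    proof -
      have "4*k*a*b > 1" using A unfolding \<Delta>_def by simp
      then have "1/(4*k*b) < a" using k0 ab by (simp add: divide_less_eq mult_ac)
      then show ?thesis by simp
    qed
    have "eventually (\<lambda>e. e*1 < a - 1/(4*k*b) \<and> e*1 < a+b - 1/k) (at_right 0)"
      using pos1 ab by (intro eventually_conj ev_small) auto
    then obtain e where e: "e > 0" "e < a - 1/(4*k*b)" "e < a+b-1/k" by (rule get_e) auto
    have "1/(4*k*b) > 0" using k0 ab by simp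
    then have e_a: "e < a" using e by linarith
    have "Phi k a b < Phi k (a - e) b"
    proof (rule Phi_less)
      show "0 < k" "0 < a" "0 \<le> b" "0 < a - e" "0 \<le> b" using k0 ab e_a by auto
      show "\<forall>w\<in>{0<..1}. 0 < gg k a b w \<longrightarrow> (a - e + b * w - (a + b * w)) * (a - e + b * w - sqrt (w / k)) \<le> 0"
      proof (intro ballI impI)
        fix w :: real assume w: "w \<in> {0<..1}"
        define u where "u = sqrt w"
        have u: "u^2 = w" "sqrt (w/k) = u/\<kappa>" using w unfolding u_def \<kappa>_def by (auto simp: real_sqrt_divide)
        have sq: "0 \<le> b*(u - 1/(2*\<kappa>*b))^2" using ab by simp
        have "b*(u - 1/(2*\<kappa>*b))^2 = b*u^2 - u/\<kappa> + 1/(4*k*b)"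
          using kp ab unfolding kp(2)[symmetric] by (simp add: power2_eq_square field_simps)
        then have "b*w - sqrt (w/k) \<ge> - 1/(4*k*b)" using sq u by simp
        then have pos: "a - e + b*w - sqrt (w/k) > 0" using e by simp
        have "(a - e + b * w - (a + b * w)) = -e" by simp
        then show "(a - e + b * w - (a + b * w)) * (a - e + b * w - sqrt (w / k)) \<le> 0"
          using pos e by (simp add: mult_pos_pos)
      qed
      obtain w where "w \<in> {0<..1}" "gg k a b w > 0" using witness[of k a b 0] k0 ab by blast
      then show "\<exists>w\<in>{0<..1}. 0 < gg k a b w \<and> a - e + b * w \<noteq> a + b * w" using e by auto
    qed
    then show ?thesis using e e_a ab by (intro exI[of _ "a-e"] exI[of _ b]) auto
  next
    case B
    note R = roots_props[OF k0 ab(1,2) \<Delta>_def B(1) \<kappa>_def \<rho>1_def \<rho>2_def]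
    have ab': "a = b*\<rho>1*\<rho>2" using R(3) ab by (simp add: field_simps)
    have p1: "a - b*\<rho>1 > 0"
    proof -
      have "a - b*\<rho>1 = b*\<rho>1*(\<rho>2 - 1)" using ab' by (simp add: algebra_simps)
      then show ?thesis using R(1) ab B by simp
    qed
    have "eventually (\<lambda>e. e*(\<rho>1^2+\<rho>1) < a - b*\<rho>1 \<and> e*(1+\<rho>1^2) < 1-(a+b) \<and> e*(1+\<rho>1^2) < a+b-1/k) (at_right 0)"
      using p1 ab by (intro eventually_conj ev_small) auto
    then obtain e where e: "e > 0" "e*(\<rho>1^2+\<rho>1) < a - b*\<rho>1" "e*(1+\<rho>1^2) < 1-(a+b)" "e*(1+\<rho>1^2) < a+b-1/k"
      by (rule get_e) auto
    have q: "a - e*\<rho>1^2 - (b+e)*\<rho>1 > 0" using e(2) by (simp add: algebra_simps)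
    have bp: "(b+e)*\<rho>1 > 0" using e ab R(1) by simp
    have ap: "a - e*\<rho>1^2 > 0" using q bp by simp
    have rho'1: "(a - e*\<rho>1^2)/((b+e)*\<rho>1) > 1" using q bp by (simp add: less_divide_eq)
    have "e*\<rho>1^2 \<ge> 0" using e by simp
    have dist1: "e*(1+\<rho>1^2) = e + e*\<rho>1^2" by (simp add: algebra_simps)
    have s1: "1/k < (a - e*\<rho>1^2) + (b+e)" using e(1) e(4) \<open>e*\<rho>1^2 \<ge> 0\<close> dist1 by linarith
    have s2: "(a - e*\<rho>1^2) + (b+e) < 1" using e(1) e(3) \<open>e*\<rho>1^2 \<ge> 0\<close> dist1 by linarith
    have "Phi k a b < Phi k (a - e*\<rho>1^2) (b+e)"
    proof (rule pin_improve)
      show "0 < k" "0 < a" "0 < b" "a + b < 1" "1/k < a+b" using k0 ab by auto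
      show "0 < \<rho>1" "e \<noteq> 0" "0 < b + e" "0 < a - e*\<rho>1^2" using R(1) e ab ap by auto
      show "a + b*\<rho>1^2 = \<rho>1/sqrt k" using R(5) unfolding \<kappa>_def .
      show "\<forall>w\<in>{0<..1}. 0 < gg k a b w \<longrightarrow> e * (sqrt w - (a - e*\<rho>1^2)/((b+e)*\<rho>1)) \<le> 0"
      proof (intro ballI impI)
        fix w :: real assume w: "w \<in> {0<..1}"
        then have "sqrt w \<le> 1" by simp
        then have "sqrt w - (a - e*\<rho>1^2)/((b+e)*\<rho>1) \<le> 0" using rho'1 by linarith
        then show "e * (sqrt w - (a - e*\<rho>1^2)/((b+e)*\<rho>1)) \<le> 0" using e(1) by (simp add: mult_nonneg_nonpos)
      qed
    qed
    then show ?thesis using ap e ab s1 s2 by (intro exI[of _ "a - e*\<rho>1^2"] exI[of _ "b+e"]) auto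
  next
    case C
    note R = roots_props[OF k0 ab(1,2) \<Delta>_def C(1) \<kappa>_def \<rho>1_def \<rho>2_def]
    have ab': "a = b*\<rho>1*\<rho>2" using R(3) ab by (simp add: field_simps)
    define \<sigma> where "\<sigma> = sqrt W"
    have r2p: "\<rho>2 > 0" using R(1,2) by simp
    have sig: "\<rho>1 < \<sigma>" unfolding \<sigma>_def using C(2) by (rule real_less_rsqrt)
    have p1: "\<sigma>*\<rho>2*b - a > 0"
    proof -
      have "\<sigma>*\<rho>2*b - a = \<rho>2*b*(\<sigma> - \<rho>1)" using ab' by (simp add: algebra_simps)
      then show ?thesis using sig r2p ab by simp
    qed
    have "eventually (\<lambda>e. e*1 < b \<and> e*(\<rho>2^2+\<sigma>*\<rho>2) < \<sigma>*\<rho>2*b - a \<and> e*(1+\<rho>2^2) < 1-(a+b) \<and> e*(1+\<rho>2^2) < a+b-1/k) (at_right 0)"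
      using p1 ab by (intro eventually_conj ev_small) auto
    then obtain e where e: "e > 0" "e < b" "e*(\<rho>2^2+\<sigma>*\<rho>2) < \<sigma>*\<rho>2*b - a" "e*(1+\<rho>2^2) < 1-(a+b)" "e*(1+\<rho>2^2) < a+b-1/k"
      by (rule get_e) auto
    have bp: "(b-e)*\<rho>2 > 0" using e r2p by simp
    have q: "a + e*\<rho>2^2 \<le> \<sigma>*((b-e)*\<rho>2)" using e(3) by (simp add: algebra_simps)
    have rho'2: "(a + e*\<rho>2^2)/((b-e)*\<rho>2) \<le> \<sigma>" using q bp by (simp add: divide_le_eq)
    have "e*\<rho>2^2 \<ge> 0" using e by simp
    have dist2: "e*(1+\<rho>2^2) = e + e*\<rho>2^2" by (simp add: algebra_simps)
    have ap: "a + e*\<rho>2^2 > 0" using ab \<open>e*\<rho>2^2 \<ge> 0\<close> by simp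
    have s1: "1/k < (a + e*\<rho>2^2) + (b-e)" using e(1) e(5) \<open>e*\<rho>2^2 \<ge> 0\<close> dist2 by linarith
    have s2: "(a + e*\<rho>2^2) + (b-e) < 1" using e(1) e(4) \<open>e*\<rho>2^2 \<ge> 0\<close> dist2 by linarith
    have "Phi k a b < Phi k (a - (-e)*\<rho>2^2) (b+(-e))"
    proof (rule pin_improve)
      show "0 < k" "0 < a" "0 < b" "a + b < 1" "1/k < a+b" using k0 ab by auto
      show "0 < \<rho>2" "-e \<noteq> 0" "0 < b + -e" "0 < a - (-e)*\<rho>2^2" using r2p e ab ap by auto
      show "a + b*\<rho>2^2 = \<rho>2/sqrt k" using R(6) unfolding \<kappa>_def .
      show "\<forall>w\<in>{0<..1}. 0 < gg k a b w \<longrightarrow> (-e) * (sqrt w - (a - (-e)*\<rho>2^2)/((b+(-e))*\<rho>2)) \<le> 0"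
      proof (intro ballI impI)
        fix w :: real assume w: "w \<in> {0<..1}" and g: "0 < gg k a b w"
        have "W < w" using supp[OF k0 ab(1,2) ab(4) w g] unfolding W_def by simp
        then have "\<sigma> < sqrt w" unfolding \<sigma>_def by (rule real_sqrt_less_mono)
        then have "sqrt w - (a + e*\<rho>2^2)/((b-e)*\<rho>2) \<ge> 0" using rho'2 by linarith
        then show "(-e) * (sqrt w - (a - (-e)*\<rho>2^2)/((b+(-e))*\<rho>2)) \<le> 0" using e(1) by simp
      qed
    qed
    then show ?thesis using ap e ab s1 s2 by (intro exI[of _ "a + e*\<rho>2^2"] exI[of _ "b-e"]) auto
  qed
qed

lemma good_conds:
  fixes k a b :: real
  assumes k1: "k > 1" and ab: "a > 0" "b > 0" "1/k < a+b" "a+b < 1"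
    and g: "1 - 4*k*a*b \<ge> 0" "(1 + sqrt (1-4*k*a*b))/(2 * sqrt k * b) \<le> 1"
       "max (a/(1-b)) ((1/k - a)/b) \<le> ((1 - sqrt (1-4*k*a*b))/(2 * sqrt k * b))^2"
  shows "a \<le> b" "1 \<le> sqrt k * (a+b)" "4*k*a*b \<le> 1" "1 - b \<le> k*a" "b \<le> k*a"
proof -
  have k0: "k > 0" using k1 by simp
  define \<Delta> where "\<Delta> = 1 - 4*k*a*b"
  define \<kappa> where "\<kappa> = sqrt k"
  define \<rho>1 where "\<rho>1 = (1 - sqrt \<Delta>)/(2*\<kappa>*b)"
  define \<rho>2 where "\<rho>2 = (1 + sqrt \<Delta>)/(2*\<kappa>*b)"
  define W where "W = max (a/(1-b)) ((1/k - a)/b)"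
  have kp: "\<kappa> > 0" "\<kappa>^2 = k" using k0 unfolding \<kappa>_def by auto
  have D: "\<Delta> \<ge> 0" using g(1) unfolding \<Delta>_def .
  have r2: "\<rho>2 \<le> 1" using g(2) unfolding \<rho>2_def \<Delta>_def \<kappa>_def by (simp add: mult_ac)
  have Wr: "W \<le> \<rho>1^2" using g(3) unfolding \<rho>1_def \<Delta>_def \<kappa>_def W_def by (simp add: mult_ac)
  note R = roots_props[OF k0 ab(1,2) \<Delta>_def D \<kappa>_def \<rho>1_def \<rho>2_def]
  have r1: "\<rho>1 \<le> 1" using R(2) r2 by simp
  have "\<rho>1*\<rho>2 \<le> 1*1" using R(1,2) r1 r2 by (intro mult_mono) auto
  then have "a/b \<le> 1" using R(3) by simp
  then show "a \<le> b" using ab by simp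
  have "a + b*1^2 - 1/\<kappa> = b*(1-\<rho>1)*(1-\<rho>2)" using R(4)[of 1] .
  moreover have "b*(1-\<rho>1)*(1-\<rho>2) \<ge> 0" using ab r1 r2 by simp
  ultimately have "1/\<kappa> \<le> a+b" by simp
  then show "1 \<le> sqrt k * (a+b)" using kp unfolding \<kappa>_def[symmetric] by (simp add: divide_le_eq mult.commute)
  show "4*k*a*b \<le> 1" using D unfolding \<Delta>_def by simp
  show iv: "1 - b \<le> k*a"
  proof (rule ccontr)
    assume "\<not> 1 - b \<le> k*a"
    then have lt: "k*a < 1 - b" by simp
    define wc where "wc = (1/k - a)/b"
    have "(1/k - a)*(1-b) - a*b > 0"
    proof -
      have "(1/k - a)*(1-b) - a*b = (1-b)/k - a" by (simp add: algebra_simps)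
      moreover have "a < (1-b)/k" using lt k0 by (simp add: less_divide_eq mult.commute)
      ultimately show ?thesis by simp
    qed
    then have lt2: "a*b < (1/k - a)*(1-b)" by simp
    have d: "b*(1-b) > 0" using ab by simp
    have e1: "a/(1-b) = (a*b)/(b*(1-b))" using ab by simp
    have e2: "wc = ((1/k - a)*(1-b))/(b*(1-b))" unfolding wc_def using ab by simp
    have "a/(1-b) < wc" unfolding e1 e2 using lt2 d by (rule divide_strict_right_mono)
    then have Wwc: "W = wc" unfolding W_def wc_def by simp
    have Xwc: "a + b*wc = 1/k" unfolding wc_def using ab by simp
    have "a < wc*(1-b)" using \<open>a/(1-b) < wc\<close> ab by (simp add: divide_less_eq)
    then have "a + b*wc < wc" by (simp add: algebra_simps)
    then have kw: "1/k < wc" using Xwc by simp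
    have "1/k > 0" using k0 by simp
    then have wcp: "wc > 0" using kw by linarith
    define u where "u = sqrt wc"
    have u: "u \<ge> 0" "u^2 = wc" using wcp unfolding u_def by auto
    have "u \<le> \<rho>1" using Wr Wwc R(1) unfolding u_def by (simp add: real_le_lsqrt)
    then have "(u-\<rho>1)*(u-\<rho>2) \<ge> 0" using R(2) by (intro mult_nonpos_nonpos) auto
    then have "b*(u-\<rho>1)*(u-\<rho>2) \<ge> 0" using ab by (simp add: mult.assoc)
    then have "a + b*wc - u/\<kappa> \<ge> 0" using R(4)[of u] u by simp
    then have "u/\<kappa> \<le> 1/k" using Xwc by simp
    then have "u \<le> \<kappa>/k" using kp by (simp add: divide_le_eq field_simps)
    also have "\<kappa>/k = 1/\<kappa>" using kp k0 by (simp add: field_simps power2_eq_square)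
    finally have uk: "u \<le> 1/\<kappa>" .
    have "u^2 \<le> (1/\<kappa>)^2" using power_mono[OF uk u(1), of 2] .
    then have "wc \<le> 1/k" using u kp by (simp add: power_divide)
    then show False using kw by simp
  qed
  have "a/(1-b) \<le> W" unfolding W_def by simp
  also have "\<dots> \<le> \<rho>1^2" by (rule Wr)
  also have "\<rho>1^2 \<le> \<rho>1*\<rho>2" using R(1,2) by (simp add: power2_eq_square)
  also have "\<dots> = a/b" by (rule R(3))
  finally have "a/(1-b) \<le> a/b" .
  then have "b \<le> 1 - b" using ab by (simp add: divide_le_eq le_divide_eq field_simps)
  then show "b \<le> k*a" using iv by simp
qed

lemma gf_props:
  fixes c G0 x :: real
  assumes "0 < c" "c < G0" "1/2 < x" "x < G0/(G0+c)"
  shows "sqrt (4 * c * G0 * x * (1-x)) < sqrt (c * G0)"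
    "sqrt (4 * c * G0 * x * (1-x)) < G0 * (1-x) + c * x"
    "c < sqrt (4 * c * G0 * x * (1-x))"
proof -
  have "G0/(G0+c) < 1" using assms by simp
  then have x1: "x < 1" using assms by linarith
  have cg: "c * G0 > 0" using assms by simp
  have "x * (1-x) < 1/4"
  proof -
    have "(x - 1/2)^2 > 0" using assms by simp
    then show ?thesis by (simp add: power2_eq_square algebra_simps)
  qed
  then have "c * G0 * (4 * (x * (1-x))) < c * G0 * 1" using cg by (intro mult_strict_left_mono) simp_all
  then have "4 * c * G0 * x * (1-x) < c * G0" by (simp add: mult_ac)
  then show "sqrt (4 * c * G0 * x * (1-x)) < sqrt (c * G0)" by (rule real_sqrt_less_mono)
  have ne: "G0 * (1-x) \<noteq> c * x"
  proof
    assume "G0 * (1-x) = c * x"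
    then have "G0 = x * (G0+c)" by (simp add: algebra_simps)
    then have "x = G0/(G0+c)" using assms by (simp add: field_simps)
    then show False using assms by simp
  qed
  have y: "G0 * (1-x) + c * x > 0" using assms x1 by (simp add: add_pos_pos)
  have "(G0 * (1-x) + c * x)^2 - 4 * c * G0 * x * (1-x) = (G0 * (1-x) - c * x)^2" by (simp add: power2_eq_square algebra_simps)
  moreover have "(G0 * (1-x) - c * x)^2 > 0" using ne by simp
  ultimately have "4 * c * G0 * x * (1-x) < (G0 * (1-x) + c * x)^2" by linarith
  then show "sqrt (4 * c * G0 * x * (1-x)) < G0 * (1-x) + c * x" using y by (intro real_less_lsqrt) auto
  define s0 where "s0 = G0/(G0+c)"
  have s0: "1 - s0 = c/(G0+c)" unfolding s0_def using assms by (simp add: field_simps)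
  have "x * (1-x) - s0 * (1-s0) = (s0 - x) * (x + s0 - 1)" by (simp add: algebra_simps)
  moreover have "s0 - x > 0" using assms unfolding s0_def by simp
  moreover have "x + s0 - 1 > 0"
  proof -
    have "(G0+c) * x > (G0+c) * (1/2)" using assms by (intro mult_strict_left_mono) auto
    moreover have "(G0+c) * (1/2) = G0/2 + c/2" by simp
    ultimately have "(G0+c) * x > c" using assms by linarith
    then have "x > c/(G0+c)" using assms by (simp add: divide_less_eq mult.commute)
    then show ?thesis using s0 by linarith
  qed
  moreover have "(s0 - x) * (x + s0 - 1) > 0" using calculation(2,3) by simp
  ultimately have xs: "s0 * (1-s0) < x * (1-x)" by linarith
  have "4 * c * G0 * (s0 * (1-s0)) = 4 * c^2 * G0^2/(G0+c)^2" unfolding s0 unfolding s0_def using assms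
    by (simp add: field_simps power2_eq_square)
  moreover have "c^2 < 4 * c^2 * G0^2/(G0+c)^2"
  proof -
    have m1: "c * c < G0 * G0" using assms by (intro mult_strict_mono) auto
    have m2: "c * G0 < G0 * G0" using assms by (intro mult_strict_right_mono) auto
    have "(G0+c)^2 = G0 * G0 + 2 * (c * G0) + c * c" "4 * G0^2 = 4 * (G0 * G0)" by (simp_all add: power2_eq_square algebra_simps)
    then have "(G0+c)^2 < 4 * G0^2" using m1 m2 by linarith
    then have "c^2 * (G0+c)^2 < c^2 * (4 * G0^2)" using assms by simp
    then show ?thesis using assms by (simp add: field_simps)
  qed
  moreover have "(4 * c * G0) * (s0 * (1-s0)) < (4 * c * G0) * (x * (1-x))" using xs cg by (intro mult_strict_left_mono) (auto simp: mult.commute)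
  ultimately have "c^2 < 4 * c * G0 * x * (1-x)" by (simp add: mult.assoc)
  then show "c < sqrt (4 * c * G0 * x * (1-x))" by (rule real_less_rsqrt)
qed


lemma closure_IV:
  fixes c G0 t \<tau> p :: real
  assumes c0: "0 < c" "c < G0" "0 < t" "0 < \<tau>" "\<tau> < t"
    and h: "1/2 \<le> \<tau>/t" "\<tau>/t \<le> G0/(G0+c)" "4 * c * G0 * (\<tau>/t) * (1-\<tau>/t) \<le> p^2"
       "p \<le> sqrt (c * G0)" "p \<le> G0 * (1-\<tau>/t)+c * (\<tau>/t)" "0 \<le> p"
  shows "(\<tau>, p) \<in> closure (region_IV c G0 t)"
proof -
  define s where "s = \<tau>/t"
  define s0 where "s0 = G0/(G0+c)"
  define sm where "sm = (1/2 + s0)/2"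
  have half: "1/2 < s0" unfolding s0_def using c0 by (simp add: less_divide_eq)
  have sm: "1/2 < sm" "sm < s0" using half unfolding sm_def by auto
  define \<theta> where "\<theta> n = inverse (real (Suc n))" for n
  have th: "0 < \<theta> n" "\<theta> n \<le> 1" for n unfolding \<theta>_def by (auto simp: inverse_le_1_iff)
  define gf where "gf x = sqrt (4 * c * G0 * x * (1-x))" for x
  define mf where "mf x = min (sqrt (c * G0)) (G0 * (1-x)+c * x)" for x
  define sn where "sn n = (1 - \<theta> n) * s + \<theta> n * sm" for n
  define pn where "pn n = max (gf (sn n)) (min p (mf (sn n)) - \<theta> n)" for n
  have s: "1/2 \<le> s" "s \<le> s0" using h unfolding s_def s0_def by auto
  have sn: "1/2 < sn n" "sn n < s0" for n
  proof -
    have t1: "1 - \<theta> n \<ge> 0" using th[of n] by simp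
    have a1: "(1-\<theta> n) * s \<ge> (1-\<theta> n) * (1/2)" using t1 s by (intro mult_left_mono) auto
    have a2: "\<theta> n * sm > \<theta> n * (1/2)" using th[of n] sm by (intro mult_strict_left_mono) auto
    have a3: "(1-\<theta> n) * s \<le> (1-\<theta> n) * s0" using t1 s by (intro mult_left_mono) auto
    have a4: "\<theta> n * sm < \<theta> n * s0" using th[of n] sm by (intro mult_strict_left_mono) auto
    have e1: "(1-\<theta> n) * (1/2) + \<theta> n * (1/2) = 1/2" "(1-\<theta> n) * s0 + \<theta> n * s0 = s0" by (simp_all add: field_simps)
    show "1/2 < sn n" "sn n < s0" unfolding sn_def using a1 a2 a3 a4 e1 by linarith+
  qed
  have s01: "s0 < 1" unfolding s0_def using c0 by simp
  have mem: "(t * sn n, pn n) \<in> region_IV c G0 t" for n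
  proof -
    note G = gf_props[OF c0(1,2) sn(1)[of n] sn(2)[of n, unfolded s0_def]]
    have x: "0 < sn n" "sn n < 1" using sn[of n] s01 by auto
    have gm: "gf (sn n) < mf (sn n)" unfolding gf_def mf_def using G by simp
    have p1: "gf (sn n) \<le> pn n" unfolding pn_def by simp
    have p2: "pn n < mf (sn n)" unfolding pn_def using gm th[of n] by simp
    have sq: "sqrt (c * G0) < G0"
    proof -
      have "c * G0 < G0 * G0" using c0 by simp
      then have "sqrt (c * G0) < sqrt (G0 * G0)" by (rule real_sqrt_less_mono)
      then show ?thesis using c0 by simp
    qed
    have gc: "c < gf (sn n)" unfolding gf_def using G by simp
    have gnn: "0 \<le> gf (sn n)" unfolding gf_def using c0 x by simp
    have gsq: "(gf (sn n))^2 = 4 * c * G0 * sn n * (1 - sn n)" unfolding gf_def using c0 x by simp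
    have "(gf (sn n))^2 \<le> (pn n)^2" using p1 gnn by (rule power_mono)
    then have p3: "4 * c * G0 * sn n * (1 - sn n) \<le> (pn n)^2" using gsq by simp
    have tt: "t * sn n / t = sn n" using c0 by simp
    show ?thesis unfolding region_IV_def dom_D_def Let_def tt
      using x c0 p1 p2 p3 gc sq sn[of n] unfolding mf_def s0_def by auto
  qed
  have thl: "\<theta> \<longlonglongrightarrow> 0" unfolding \<theta>_def by (rule LIMSEQ_inverse_real_of_nat)
  have snl: "sn \<longlonglongrightarrow> (1 - 0) * s + 0 * sm" unfolding sn_def by (intro tendsto_intros thl)
  then have snl': "sn \<longlonglongrightarrow> s" by simp
  have pnl: "pn \<longlonglongrightarrow> max (gf s) (min p (mf s) - 0)" unfolding pn_def gf_def mf_def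
    by (intro tendsto_intros snl' thl)
  have "min p (mf s) = p" unfolding mf_def using h unfolding s_def by simp
  moreover have "gf s \<le> p"
  proof -
    have "gf s \<le> sqrt (p^2)" unfolding gf_def s_def using h(3) by (rule real_sqrt_le_mono)
    then show ?thesis using h(6) by simp
  qed
  ultimately have "max (gf s) (min p (mf s) - 0) = p" by simp
  then have pnl': "pn \<longlonglongrightarrow> p" using pnl by simp
  have "(\<lambda>n. (t * sn n, pn n)) \<longlonglongrightarrow> (t * s, p)" by (intro tendsto_intros snl' pnl')
  moreover have "t * s = \<tau>" unfolding s_def using c0 by simp
  ultimately have "(\<lambda>n. (t * sn n, pn n)) \<longlonglongrightarrow> (\<tau>, p)" by simp
  then show ?thesis unfolding closure_sequential using mem by (intro exI[of _ "\<lambda>n. (t * sn n, pn n)"]) auto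
qed


theorem theorem3:
  fixes c G0 t \<tau>s ps :: real
  assumes "0 < c" and "c < G0" and "0 < t"
    and "(\<tau>s, ps) \<in> dom_D c G0 t"
    and "\<forall>(\<tau>, p) \<in> dom_D c G0 t. coop_area c G0 t \<tau> p \<le> coop_area c G0 t \<tau>s ps"
  shows "(\<tau>s, ps) \<in> closure (region_IV c G0 t)
    \<or> ((\<tau>s, ps) \<in> region_V c G0 t \<and>
        A_c G0 t \<tau>s ps (w1 c G0 t \<tau>s ps) 1 - A_s c t \<tau>s ps (w0 c G0 t \<tau>s ps) (w1 c G0 t \<tau>s ps)
          = 1 - 2 * w1 c G0 t \<tau>s ps + w0 c G0 t \<tau>s ps)
    \<or> ((\<tau>s, ps) \<in> region_VI c G0 t \<and>
        A_s c t \<tau>s ps (w2 c G0 t \<tau>s ps) 1 - A_c G0 t \<tau>s ps (w0 c G0 t \<tau>s ps) (w2 c G0 t \<tau>s ps)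
          = 1 - 2 * w2 c G0 t \<tau>s ps + w0 c G0 t \<tau>s ps)"
proof -
  have D: "0 < \<tau>s" "\<tau>s < t" "c < ps" "ps < G0" using assms(4) unfolding dom_D_def by auto
  have c0: "0 < c" "c < G0" "0 < t" using assms(1-3) .
  have ps0: "ps > 0" using D c0 by simp
  define k where "k = G0 / c"
  define s where "s = \<tau>s / t"
  define a where "a = c * (1 - s) / ps"
  define b where "b = c * s / ps"
  have s01: "0 < s" "s < 1" unfolding s_def using D c0 by auto
  have k1: "k > 1" unfolding k_def using c0 by simp
  have ab: "a > 0" "b > 0" unfolding a_def b_def using s01 ps0 c0 by auto
  have sab: "a + b = c / ps" unfolding a_def b_def by (simp add: algebra_simps add_divide_distrib[symmetric])
  have ik: "1 / k = c / G0" unfolding k_def by simp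
  have q1: "c / G0 < c / ps" using c0 D ps0 by (intro divide_strict_left_mono) auto
  have q2: "c / ps < 1" using D ps0 by simp
  have ab2: "1 / k < a + b" "a + b < 1" unfolding sab ik using q1 q2 by auto
  have coop0: "coop_area c G0 t \<tau>s ps = Phi k a b"
    unfolding a_def b_def k_def s_def using coop_Phi[of c t \<tau>s ps G0] c0 D ps0 by simp
  have good: "1 - 4 * k * a * b \<ge> 0 \<and> (1 + sqrt (1 - 4 * k * a * b)) / (2 * sqrt k * b) \<le> 1
               \<and> max (a / (1 - b)) ((1 / k - a) / b) \<le> ((1 - sqrt (1 - 4 * k * a * b)) / (2 * sqrt k * b))^2"
  proof (rule ccontr)
    assume ng: "\<not> ?thesis"
    obtain a' b' where nb: "a' > 0" "b' > 0" "1 / k < a' + b'" "a' + b' < 1" "Phi k a b < Phi k a' b'"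
      using improve[OF k1 ab ab2 ng] by blast
    define p' where "p' = c / (a' + b')"
    define \<tau>' where "\<tau>' = t * (b' / (a' + b'))"
    have sp: "a' + b' > 0" using nb by simp
    have p'1: "c < p'" unfolding p'_def using nb c0 sp by (simp add: less_divide_eq)
    have p'2: "p' < G0"
    proof -
      have "c / G0 < a' + b'" using nb(3) ik by simp
      then have "c < G0 * (a' + b')" using c0 by (simp add: divide_less_eq mult.commute)
      then show ?thesis unfolding p'_def using sp by (simp add: divide_less_eq mult.commute)
    qed
    have bt: "0 < b' / (a' + b')" "b' / (a' + b') < 1" using nb sp by (auto simp: divide_less_eq)
    have t'1a: "0 < \<tau>'" unfolding \<tau>'_def using bt c0 by (intro mult_pos_pos) auto
    have "t * (b' / (a' + b')) < t * 1" using bt c0 by (intro mult_strict_left_mono) auto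
    then have t'1b: "\<tau>' < t" unfolding \<tau>'_def by simp
    note t'1 = t'1a t'1b
    have inD: "(\<tau>', p') \<in> dom_D c G0 t" unfolding dom_D_def using p'1 p'2 t'1 by auto
    have tt: "\<tau>' / t = b' / (a' + b')" unfolding \<tau>'_def using c0 by simp
    have gen: "\<And>x S. S > 0 \<Longrightarrow> c * (x / S) / (c / S) = x" using c0 by (simp add: field_simps)
    have "1 - b' / (a' + b') = a' / (a' + b')" using sp by (simp add: field_simps)
    then have ea: "c * (1 - \<tau>' / t) / p' = a'" unfolding tt p'_def using gen[OF sp] by simp
    have eb: "c * (\<tau>' / t) / p' = b'" unfolding tt p'_def using gen[OF sp] by simp
    have "coop_area c G0 t \<tau>' p' = Phi k a' b'"
      using coop_Phi[of c t \<tau>' p' G0] c0 t'1 p'1 unfolding ea eb k_def by simp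
    moreover have "coop_area c G0 t \<tau>' p' \<le> coop_area c G0 t \<tau>s ps" using assms(5) inD by blast
    ultimately show False using nb(5) coop0 by simp
  qed
  note GC = good_conds[OF k1 ab ab2 conjunct1[OF good] conjunct1[OF conjunct2[OF good]] conjunct2[OF conjunct2[OF good]]]
  have h1: "1 / 2 \<le> s"
  proof -
    have "c * (1 - s) / ps \<le> c * s / ps" using GC(1) unfolding a_def b_def .
    then have "c * (1 - s) \<le> c * s" using ps0 by (simp add: divide_le_cancel)
    then show ?thesis using c0 by simp
  qed
  have h2: "s \<le> G0 / (G0 + c)"
  proof -
    have "c * s / ps \<le> G0 / c * (c * (1 - s) / ps)" using GC(5) unfolding a_def b_def k_def .
    also have "G0 / c * (c * (1 - s) / ps) = G0 * (1 - s) / ps" using c0 by simp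
    finally have "c * s \<le> G0 * (1 - s)" using ps0 by (simp add: divide_le_cancel)
    then have "s * (G0 + c) \<le> G0" by (simp add: algebra_simps)
    then show ?thesis using c0 by (simp add: le_divide_eq)
  qed
  have h3: "4 * c * G0 * s * (1 - s) \<le> ps^2"
  proof -
    have "4 * k * a * b = 4 * c * G0 * s * (1 - s) / ps^2" unfolding k_def a_def b_def using c0 ps0
      by (simp add: field_simps power2_eq_square)
    then have "4 * c * G0 * s * (1 - s) / ps^2 \<le> 1" using GC(3) by simp
    then show ?thesis using ps0 by (simp add: divide_le_eq)
  qed
  have h4: "ps \<le> sqrt (c * G0)"
  proof -
    have "c * G0 = c^2 * k" unfolding k_def using c0 by (simp add: power2_eq_square)
    then have "sqrt (c * G0) = sqrt (c^2) * sqrt k" by (simp add: real_sqrt_mult)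
    then have "sqrt (c * G0) = c * sqrt k" using c0 by simp
    moreover have "1 \<le> sqrt k * (c / ps)" using GC(2) sab by simp
    then have "ps \<le> sqrt k * c" using ps0 by (simp add: le_divide_eq mult.commute)
    ultimately show ?thesis by (simp add: mult.commute)
  qed
  have h5: "ps \<le> G0 * (1 - s) + c * s"
  proof -
    have "1 - c * s / ps \<le> G0 / c * (c * (1 - s) / ps)" using GC(4) unfolding a_def b_def k_def .
    also have "G0 / c * (c * (1 - s) / ps) = G0 * (1 - s) / ps" using c0 by simp
    finally have "(ps - c * s) / ps \<le> G0 * (1 - s) / ps" using ps0 by (simp add: diff_divide_distrib)
    then have "ps - c * s \<le> G0 * (1 - s)" using ps0 by (simp add: divide_le_cancel)
    then show ?thesis by simp
  qed
  have "(\<tau>s, ps) \<in> closure (region_IV c G0 t)"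
    using closure_IV[OF c0 D(1,2)] h1 h2 h3 h4 h5 ps0 unfolding s_def by simp
  then show ?thesis by blast
qed

end
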